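(* Let $\alpha\in[1,3)$ and let $W$ be a graphon maximizing $d(H_1,W)-\alpha\, d(H_3,W)$ over all graphons. Then for almost every pair $(x,y)\in[0,1]^2$ with $W(x,y)<1$ it holds that $d_W(x)+d_W(y)\ge 1/2$.
   Context: A graphon is a symmetric measurable function $W:[0,1]^2\to[0,1]$. A $k$-vertex $W$-random graph is obtained by sampling $x_1,\dots,x_k$ independently and uniformly from $[0,1]$ and joining vertices $i$ and $j$ independently with probability $W(x_i,x_j)$; for a $k$-vertex graph $H$, $d(H,W)$ is the probability that the $k$-vertex $W$-random graph is isomorphic to $H$. The degree of $x\in[0,1]$ is $d_W(x)=\int_0^1 W(x,y)\,dy$. For $k\in\{0,1,2,3\}$, $H_k$ denotes the 3-vertex graph with exactly $k$ edges. *)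

theory Defs
  imports "HOL-Probability.Probability"
begin

text \<open>Graphons: symmetric measurable functions [0,1]^2 -> [0,1]. We represent them as
  functions real => real => real that are Borel measurable on the plane; only the
  values on the unit square matter.\<close>

definition graphon :: "(real \<Rightarrow> real \<Rightarrow> real) \<Rightarrow> bool" where
  "graphon W \<longleftrightarrow>
     (\<lambda>p. W (fst p) (snd p)) \<in> borel_measurable (lborel \<Otimes>\<^sub>M lborel) \<and>
     (\<forall>x\<in>{0..1}. \<forall>y\<in>{0..1}. W x y = W y x \<and> 0 \<le> W x y \<and> W x y \<le> 1)"

definition unif :: "real measure" where
  "unif = uniform_measure lborel {0..1}"

definition vpairs :: "nat \<Rightarrow> nat set set" where
  "vpairs k = {{i, j} | i j. i < j \<and> j < k}"

definition edge_prob :: "(real \<Rightarrow> real \<Rightarrow> real) \<Rightarrow> nat \<Rightarrow> nat set set \<Rightarrow> (nat \<Rightarrow> real) \<Rightarrow> real" where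
  "edge_prob W k F x =
     (\<Prod>e\<in>vpairs k. if e \<in> F then W (x (Min e)) (x (Max e)) else 1 - W (x (Min e)) (x (Max e)))"

definition ind_prob :: "(real \<Rightarrow> real \<Rightarrow> real) \<Rightarrow> nat \<Rightarrow> nat set set \<Rightarrow> real" where
  "ind_prob W k F = (\<integral>x. edge_prob W k F x \<partial>(PiM {..<k} (\<lambda>_. unif)))"

definition graph_iso :: "nat \<Rightarrow> nat set set \<Rightarrow> nat set set \<Rightarrow> bool" where
  "graph_iso k F G \<longleftrightarrow> (\<exists>\<pi>. \<pi> permutes {..<k} \<and> (\<lambda>e. \<pi> ` e) ` F = G)"

text \<open>d(H,W): probability that the k-vertex W-random graph is isomorphic to H
  (H given as an edge set on {0..<k}).\<close>
definition dens :: "nat \<Rightarrow> nat set set \<Rightarrow> (real \<Rightarrow> real \<Rightarrow> real) \<Rightarrow> real" where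
  "dens k H W = (\<Sum>F\<in>{F. F \<subseteq> vpairs k \<and> graph_iso k H F}. ind_prob W k F)"

text \<open>H_1: 3-vertex graph with one edge; H_3: the triangle.\<close>
definition H1 :: "nat set set" where "H1 = {{0, 1}}"
definition H3 :: "nat set set" where "H3 = vpairs 3"

definition degree :: "(real \<Rightarrow> real \<Rightarrow> real) \<Rightarrow> real \<Rightarrow> real" where
  "degree W x = (\<integral>y. W x y \<partial>unif)"

end

theory Submission
  imports Defs
begin


lemma vpairs3: "vpairs 3 = {{0,1},{0,2},{1,2}}"
proof -
  have "{0::nat,1} \<in> vpairs 3" "{0::nat,2} \<in> vpairs 3" "{1::nat,2}\<in>vpairs 3"
    unfolding vpairs_def by force+
  moreover have "vpairs 3 \<subseteq> {{0,1},{0,2},{1,2}}"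
    unfolding vpairs_def by (auto simp: less_Suc_eq numeral_3_eq_3)
  ultimately show ?thesis by blast
qed

lemma perm3:
  assumes "\<pi> permutes {..<3::nat}"
  shows "(\<pi> 0, \<pi> 1, \<pi> 2) \<in> {(0,1,2),(0,2,1),(1,0,2),(1,2,0),(2,0,1),(2,1,0)}"
proof -
  have r: "\<pi> k \<in> {0,1,2}" if "k < 3" for k
    using permutes_in_image[OF assms, of k] that by (auto simp: less_Suc_eq numeral_3_eq_3)
  have i: "inj \<pi>" using permutes_inj[OF assms] .
  have d: "\<pi> 0 \<noteq> \<pi> 1" "\<pi> 0 \<noteq> \<pi> 2" "\<pi> 1 \<noteq> \<pi> 2"
    using i by (simp_all add: inj_eq)
  have "\<pi> 0 \<in> {0,1,2}" "\<pi> 1 \<in> {0,1,2}" "\<pi> 2 \<in> {0,1,2}" by (rule r; simp)+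
  then show ?thesis using d
    by (elim insertE emptyE; simp)
qed

lemma tr_perm: "a < 3 \<Longrightarrow> b < 3 \<Longrightarrow> Transposition.transpose a b permutes {..<3::nat}"
  by (rule permutes_swap_id) auto

lemma H1_set: "{F. F \<subseteq> vpairs 3 \<and> graph_iso 3 H1 F} = {{{0,1}},{{0,2}},{{1,2}}}"
proof -
  have a: "graph_iso 3 H1 F \<longleftrightarrow> (\<exists>\<pi>. \<pi> permutes {..<3} \<and> F = {{\<pi> 0, \<pi> 1}})" for F
    unfolding graph_iso_def H1_def by auto
  have "F \<in> {{{0,1}},{{0,2}},{{1,2}}}" if g: "graph_iso 3 H1 F" for F
  proof -
    obtain \<pi> where p: "\<pi> permutes {..<3}" "F = {{\<pi> 0, \<pi> 1}}" using a g by blast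
    show ?thesis using perm3[OF p(1)] p(2) by (auto simp: doubleton_eq_iff)
  qed
  moreover have "graph_iso 3 H1 {{0,1}}" unfolding a
    by (rule exI[of _ id]) (auto intro: permutes_id)
  moreover have "graph_iso 3 H1 {{0,2}}" unfolding a
    by (rule exI[of _ "Transposition.transpose 1 2"]) (auto intro: tr_perm)
  moreover have "graph_iso 3 H1 {{1,2}}" unfolding a
    by (rule exI[of _ "Transposition.transpose 0 2"]) (auto intro: tr_perm simp: doubleton_eq_iff)
  moreover have "{{0,1}} \<subseteq> vpairs 3" "{{0,2}} \<subseteq> vpairs 3" "{{1,2}} \<subseteq> vpairs 3"
    by (auto simp: vpairs3)
  ultimately have X: "(F \<subseteq> vpairs 3 \<and> graph_iso 3 H1 F) \<longleftrightarrow> (F = {{0,1}} \<or> F = {{0,2}} \<or> F = {{1,2}})" for F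
    by (smt (verit) insertE singletonD)
  show ?thesis unfolding X by auto
qed

lemma H3_set: "{F. F \<subseteq> vpairs 3 \<and> graph_iso 3 H3 F} = {vpairs 3}"
proof -
  have "F = vpairs 3" if g: "graph_iso 3 H3 F" for F
  proof -
    obtain \<pi> where p: "\<pi> permutes {..<3}" "F = (\<lambda>e. \<pi> ` e) ` vpairs 3"
      using g unfolding graph_iso_def H3_def by blast
    have img: "F = {{\<pi> 0, \<pi> 1},{\<pi> 0, \<pi> 2},{\<pi> 1, \<pi> 2}}" using p(2) by (simp add: vpairs3)
    have all: "\<forall>(a,b,c)\<in>{(0,1,2),(0,2,1),(1,0,2),(1,2,0),(2,0,1),(2,1,0)}. {{a,b},{a,c},{b,c}} = {{0::nat,1},{0,2},{1,2}}"
      by code_simp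
    show ?thesis using bspec[OF all perm3[OF p(1)]] img by (simp add: vpairs3)
  qed
  moreover have "graph_iso 3 H3 (vpairs 3)" unfolding graph_iso_def H3_def
    by (rule exI[of _ id]) (auto intro: permutes_id)
  ultimately show ?thesis by blast
qed

lemma dens_H1: "dens 3 H1 V = ind_prob V 3 {{0,1}} + ind_prob V 3 {{0,2}} + ind_prob V 3 {{1,2}}"
  unfolding dens_def H1_set by (simp add: doubleton_eq_iff)

lemma dens_H3: "dens 3 H3 V = ind_prob V 3 (vpairs 3)"
  unfolding dens_def H3_set by simp

lemma ep: "edge_prob V 3 F x =
  (if {0,1} \<in> F then V (x 0) (x 1) else 1 - V (x 0) (x 1)) *
  (if {0,2} \<in> F then V (x 0) (x 2) else 1 - V (x 0) (x 2)) *
  (if {1,2} \<in> F then V (x 1) (x 2) else 1 - V (x 1) (x 2))"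
  unfolding edge_prob_def vpairs3 by (simp add: doubleton_eq_iff numeral_2_eq_2)



lemma unif_prob: "prob_space unif"
  unfolding unif_def by (rule prob_space_uniform_measure) auto

lemma AE_unif: "AE x in unif. x \<in> {0..1}"
  unfolding unif_def by (rule AE_uniform_measureI) auto

lemma sets_unif[simp, measurable_cong]: "sets unif = sets borel"
  unfolding unif_def by simp
lemma space_unif[simp]: "space unif = UNIV"
  unfolding unif_def by simp

lemma pps: "product_prob_space (\<lambda>_::nat. unif)"
  by (rule product_prob_spaceI) (rule unif_prob)

lemma pspace: "prob_space (PiM J (\<lambda>_::nat. unif))"
proof -
  interpret product_prob_space "\<lambda>_::nat. unif" J by (rule pps)
  show ?thesis by unfold_locales
qed

definition M3 :: "(nat \<Rightarrow> real) measure" where "M3 = PiM {..<3} (\<lambda>_. unif)"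

lemma M3_prob: "prob_space M3" unfolding M3_def by (rule pspace)

lemma AE3: "AE x in M3. x 0 \<in> {0..1} \<and> x 1 \<in> {0..1} \<and> x 2 \<in> {0..1}"
proof -
  interpret P: product_prob_space "\<lambda>_::nat. unif" "{..<3::nat}" by (rule pps)
  show ?thesis unfolding M3_def
    by (intro eventually_conj P.AE_component AE_unif) auto
qed

lemma meas_coord: "i \<in> J \<Longrightarrow> (\<lambda>x. x i) \<in> borel_measurable (PiM J (\<lambda>_::nat. unif))"
  by measurable

lemma int_bound_abs:
  assumes "prob_space M" "\<And>x. \<bar>h x\<bar> \<le> (B::real)"
  shows "\<bar>integral\<^sup>L M h\<bar> \<le> B"
proof (cases "integrable M h")
  case True
  interpret prob_space M by fact
  have "integral\<^sup>L M h \<le> B" by (rule integral_le_const[OF True]) (use assms(2) in \<open>auto intro!: AE_I2 simp: abs_le_iff\<close>)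
  moreover have "- B \<le> integral\<^sup>L M h"
  proof (rule integral_ge_const[OF True], intro AE_I2)
    fix x show "-B \<le> h x" using abs_le_D2[OF assms(2)[of x]] by linarith
  qed
  ultimately show ?thesis by linarith
next
  case False
  then show ?thesis using assms(2)[of undefined] by (simp add: not_integrable_integral_eq)
qed

lemma int_bound:
  assumes "prob_space M" "f \<in> borel_measurable M" "\<And>x. \<bar>f x\<bar> \<le> (B::real)"
  shows "integrable M f"
proof -
  interpret prob_space M by fact
  show ?thesis by (rule integrable_const_bound[where B=B]) (use assms in auto)
qed

lemma L3:
  fixes f :: "(nat \<Rightarrow> real) \<Rightarrow> real"
  assumes fm: "f \<in> borel_measurable M3" and fb: "\<And>x. \<bar>f x\<bar> \<le> B"
    and ijk: "{..<3} = {i,j,k}" "i \<noteq> j" "i \<noteq> k" "j \<noteq> k"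
  shows "integral\<^sup>L M3 f = (\<integral>u. \<integral>v. \<integral>w. f ((\<lambda>_. undefined)(i:=u, j:=v, k:=w)) \<partial>unif \<partial>unif \<partial>unif)"
proof -
  interpret P: product_prob_space "\<lambda>_::nat. unif" "{..<3::nat}" by (rule pps)
  interpret U: prob_space unif by (rule unif_prob)
  have e: "{..<3} = insert k (insert j {i})" using ijk by auto
  have fm'[measurable]: "f \<in> borel_measurable (PiM (insert k (insert j {i})) (\<lambda>_. unif))"
    using fm unfolding M3_def e .
  have S1: "integral\<^sup>L M3 f = (\<integral>x. (\<integral>w. f (x(k:=w)) \<partial>unif) \<partial>PiM (insert j {i}) (\<lambda>_. unif))"
    unfolding M3_def e
    by (rule P.product_integral_insert) (use ijk fm' fb in \<open>auto intro!: int_bound pspace\<close>)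
  define G where "G x = (\<integral>w. f (x(k:=w)) \<partial>unif)" for x
  have Gm[measurable]: "G \<in> borel_measurable (PiM (insert j {i}) (\<lambda>_. unif))"
    unfolding G_def by measurable
  have Gb: "\<bar>G x\<bar> \<le> B" for x unfolding G_def by (rule int_bound_abs[OF unif_prob fb])
  have S2: "integral\<^sup>L (PiM (insert j {i}) (\<lambda>_. unif)) G = (\<integral>x. (\<integral>v. G (x(j:=v)) \<partial>unif) \<partial>PiM {i} (\<lambda>_. unif))"
    by (rule P.product_integral_insert) (use ijk Gm Gb in \<open>auto intro!: int_bound pspace\<close>)
  define H where "H x = (\<integral>v. G (x(j:=v)) \<partial>unif)" for x
  have Hm[measurable]: "H \<in> borel_measurable (PiM {i} (\<lambda>_. unif))"
    unfolding H_def by measurable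
  define K where "K u = H ((\<lambda>_. undefined)(i:=u))" for u
  have Km: "K \<in> borel_measurable unif"
  proof -
    have "(\<lambda>u. (\<lambda>_. undefined)(i:=u)) \<in> measurable unif (PiM (insert i {}) (\<lambda>_::nat. unif))"
      by (rule measurable_component_update) (auto simp: space_PiM)
    then show ?thesis unfolding K_def using Hm by simp
  qed
  have S3: "integral\<^sup>L (PiM {i} (\<lambda>_. unif)) H = (\<integral>x. K (x i) \<partial>PiM {i} (\<lambda>_. unif))"
  proof (rule Bochner_Integration.integral_cong[OF refl])
    fix x assume "x \<in> space (PiM {i} (\<lambda>_::nat. unif))"
    then have "x = (\<lambda>_. undefined)(i := x i)" by (auto simp: space_PiM PiE_def extensional_def)
    then show "H x = K (x i)" unfolding K_def by metis
  qed
  have S4: "(\<integral>x. K (x i) \<partial>PiM {i} (\<lambda>_. unif)) = integral\<^sup>L unif K"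
    by (rule P.product_integral_singleton) (rule Km)
  show ?thesis
    unfolding S1 G_def[symmetric] S2 H_def[symmetric] S3 S4
    by (simp add: K_def[abs_def] H_def[abs_def] G_def[abs_def])
qed



definition clip :: "real \<Rightarrow> real" where "clip x = max 0 (min 1 x)"
definition Wt :: "(real \<Rightarrow> real \<Rightarrow> real) \<Rightarrow> real \<Rightarrow> real \<Rightarrow> real" where
  "Wt W x y = W (clip x) (clip y)"
definition Dt :: "(real \<Rightarrow> real \<Rightarrow> real) \<Rightarrow> real \<Rightarrow> real" where
  "Dt W x = degree W (clip x)"
definition gg :: "(real \<Rightarrow> real \<Rightarrow> real) \<Rightarrow> real \<Rightarrow> real \<Rightarrow> real" where
  "gg W x y = (if Wt W x y < 1 \<and> Dt W x + Dt W y < 1/2 then 1 - Wt W x y else 0)"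

lemma clip_in: "clip x \<in> {0..1}" by (simp add: clip_def)
lemma clip_id: "x \<in> {0..1} \<Longrightarrow> clip x = x" by (simp add: clip_def)
lemma clip_meas[measurable (raw)]: "f \<in> borel_measurable M \<Longrightarrow> (\<lambda>x. clip (f x)) \<in> borel_measurable M"
proof -
  have "continuous_on UNIV clip" unfolding clip_def by (intro continuous_intros)
  then have "clip \<in> borel_measurable borel" by (rule borel_measurable_continuous_onI)
  then show "f \<in> borel_measurable M \<Longrightarrow> (\<lambda>x. clip (f x)) \<in> borel_measurable M"
    using measurable_compose[of f M borel clip borel] by simp
qed

lemma W2m:
  assumes "graphon V" "f \<in> borel_measurable M" "g \<in> borel_measurable M"
  shows "(\<lambda>x. V (f x) (g x)) \<in> borel_measurable M"
proof -
  have s: "sets (lborel \<Otimes>\<^sub>M lborel) = sets (borel \<Otimes>\<^sub>M (borel::real measure))"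
    by (rule sets_pair_measure_cong) simp_all
  have 1: "(\<lambda>p. V (fst p) (snd p)) \<in> borel_measurable (borel \<Otimes>\<^sub>M borel)"
    using assms(1) unfolding graphon_def measurable_cong_sets[OF s refl] by simp
  have 2: "(\<lambda>x. (f x, g x)) \<in> measurable M (borel \<Otimes>\<^sub>M borel)"
    using assms(2,3) by (rule measurable_Pair)
  show ?thesis using measurable_compose[OF 2 1] by simp
qed

context
  fixes W :: "real \<Rightarrow> real \<Rightarrow> real"
  assumes gW: "graphon W"
begin

lemma W_meas[measurable (raw)]:
  "f \<in> borel_measurable M \<Longrightarrow> g \<in> borel_measurable M \<Longrightarrow> (\<lambda>x. W (f x) (g x)) \<in> borel_measurable M"
  by (rule W2m[OF gW])

lemma Wt_meas[measurable (raw)]: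
  assumes [measurable]: "f \<in> borel_measurable M" "g \<in> borel_measurable M"
  shows "(\<lambda>x. Wt W (f x) (g x)) \<in> borel_measurable M"
  unfolding Wt_def by (intro W_meas clip_meas assms)

lemma W_sym: "x \<in> {0..1} \<Longrightarrow> y \<in> {0..1} \<Longrightarrow> W x y = W y x"
  using gW unfolding graphon_def by auto
lemma W_b: "x \<in> {0..1} \<Longrightarrow> y \<in> {0..1} \<Longrightarrow> 0 \<le> W x y \<and> W x y \<le> 1"
  using gW unfolding graphon_def by auto

lemma Wt_sym: "Wt W x y = Wt W y x"
  unfolding Wt_def using W_sym clip_in by blast
lemma Wt_b: "0 \<le> Wt W x y" "Wt W x y \<le> 1"
  unfolding Wt_def using W_b clip_in by blast+

lemma Wt_id: "x \<in> {0..1} \<Longrightarrow> y \<in> {0..1} \<Longrightarrow> Wt W x y = W x y"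
  unfolding Wt_def by (simp add: clip_id)

lemma Dt_int: "(\<integral>y. Wt W x y \<partial>unif) = Dt W x"
  unfolding Dt_def degree_def
proof (rule integral_cong_AE)
  show "(\<lambda>y. Wt W x y) \<in> borel_measurable unif" by measurable
  show "(\<lambda>y. W (clip x) y) \<in> borel_measurable unif" by measurable
  show "AE y in unif. Wt W x y = W (clip x) y"
    using AE_unif by eventually_elim (simp add: Wt_def clip_id)
qed

lemma Wt_int: "integrable unif (\<lambda>y. Wt W x y)"
  by (rule int_bound[OF unif_prob, where B=1]) (use Wt_b in \<open>auto simp: abs_le_iff\<close>)

lemma Dt_b: "0 \<le> Dt W x" "Dt W x \<le> 1"
proof -
  interpret U: prob_space unif by (rule unif_prob)
  show "0 \<le> Dt W x" unfolding Dt_int[symmetric]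
    by (rule U.integral_ge_const[OF Wt_int]) (simp add: Wt_b)
  show "Dt W x \<le> 1" unfolding Dt_int[symmetric]
    by (rule U.integral_le_const[OF Wt_int]) (simp add: Wt_b)
qed

lemma Dt_borel: "Dt W \<in> borel_measurable borel"
proof -
  interpret U: prob_space unif by (rule unif_prob)
  have "Dt W = (\<lambda>x. \<integral>y. Wt W x y \<partial>unif)" by (simp add: Dt_int)
  also have "\<dots> \<in> borel_measurable borel"
    by (rule U.borel_measurable_lebesgue_integral) measurable
  finally show ?thesis .
qed

lemma Dt_meas[measurable (raw)]:
  "f \<in> borel_measurable M \<Longrightarrow> (\<lambda>x. Dt W (f x)) \<in> borel_measurable M"
  using measurable_compose[OF _ Dt_borel, of f M] by simp

lemma gg_meas[measurable (raw)]:
  assumes [measurable]: "f \<in> borel_measurable M" "h \<in> borel_measurable M"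
  shows "(\<lambda>x. gg W (f x) (h x)) \<in> borel_measurable M"
  unfolding gg_def by measurable

lemma gg_sym: "gg W x y = gg W y x"
  unfolding gg_def by (simp add: Wt_sym add.commute)
lemma gg_b: "0 \<le> gg W x y" "gg W x y \<le> 1"
  unfolding gg_def using Wt_b[of x y] by auto

end


definition Phi :: "real \<Rightarrow> real \<Rightarrow> real \<Rightarrow> real \<Rightarrow> real" where
  "Phi \<alpha> a b c = a*(1-b)*(1-c) + (1-a)*b*(1-c) + (1-a)*(1-b)*c - \<alpha>*a*b*c"

lemma poly_id:
  "Phi \<alpha> (a+e*p) (b+e*q) (c+e*r) - Phi \<alpha> a b c =
    e*(p*(1-2*b-2*c+(3-\<alpha>)*b*c) + q*(1-2*a-2*c+(3-\<alpha>)*a*c) + r*(1-2*a-2*b+(3-\<alpha>)*a*b))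
  + e^2*(p*q*(-2+(3-\<alpha>)*c) + p*r*(-2+(3-\<alpha>)*b) + q*r*(-2+(3-\<alpha>)*a)) + e^3*(p*q*r*(3-\<alpha>))"
  unfolding Phi_def power2_eq_square power3_eq_cube by (simp add: algebra_simps)

lemma poly_ineq:
  fixes a b c p q r e \<alpha> :: real
  assumes "0 \<le> a" "a \<le> 1" "0 \<le> b" "b \<le> 1" "0 \<le> c" "c \<le> 1"
    "0 \<le> p" "p \<le> 1" "0 \<le> q" "q \<le> 1" "0 \<le> r" "r \<le> 1" "0 \<le> e" "\<alpha> \<le> 3"
  shows "Phi \<alpha> (a+e*p) (b+e*q) (c+e*r) - Phi \<alpha> a b c \<ge>
     e*(p*(1-2*b-2*c) + q*(1-2*a-2*c) + r*(1-2*a-2*b)) - 6*e^2"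
proof -
  have t: "0 \<le> 3 - \<alpha>" using assms by simp
  have h1: "p*(1-2*b-2*c) \<le> p*(1-2*b-2*c+(3-\<alpha>)*b*c)"
    using assms t by (intro mult_left_mono) auto
  have h2: "q*(1-2*a-2*c) \<le> q*(1-2*a-2*c+(3-\<alpha>)*a*c)"
    using assms t by (intro mult_left_mono) auto
  have h3: "r*(1-2*a-2*b) \<le> r*(1-2*a-2*b+(3-\<alpha>)*a*b)"
    using assms t by (intro mult_left_mono) auto
  have k: "-2 \<le> x*y*(-2+(3-\<alpha>)*z)" if "0\<le>x" "x\<le>1" "0\<le>y" "y\<le>1" "0\<le>z" for x y z :: real
  proof -
    have "x*y \<le> 1" using that by (simp add: mult_le_one)
    have "0 \<le> x*y" using that by simp
    have "x*y*(-2) \<le> x*y*(-2+(3-\<alpha>)*z)" using that t \<open>0 \<le> x*y\<close> by (intro mult_left_mono) auto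
    then show ?thesis using \<open>x*y \<le> 1\<close> by linarith
  qed
  have h4: "-6 \<le> p*q*(-2+(3-\<alpha>)*c) + p*r*(-2+(3-\<alpha>)*b) + q*r*(-2+(3-\<alpha>)*a)"
    using k[of p q c] k[of p r b] k[of q r a] assms by linarith
  have h5: "0 \<le> e^3*(p*q*r*(3-\<alpha>))" using assms t by simp
  have A: "e*(p*(1-2*b-2*c) + q*(1-2*a-2*c) + r*(1-2*a-2*b)) \<le>
      e*(p*(1-2*b-2*c+(3-\<alpha>)*b*c) + q*(1-2*a-2*c+(3-\<alpha>)*a*c) + r*(1-2*a-2*b+(3-\<alpha>)*a*b))"
    using h1 h2 h3 assms by (intro mult_left_mono) auto
  have B: "e^2*(-6) \<le> e^2*(p*q*(-2+(3-\<alpha>)*c) + p*r*(-2+(3-\<alpha>)*b) + q*r*(-2+(3-\<alpha>)*a))"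
    using h4 by (intro mult_left_mono) auto
  show ?thesis unfolding poly_id using A B h5 by linarith
qed

lemma unit3: "x \<in> {0..1} \<Longrightarrow> y \<in> {0..1} \<Longrightarrow> z \<in> {0..1} \<Longrightarrow> \<bar>x*y*z\<bar> \<le> (1::real)"
  by (auto simp: abs_mult intro!: mult_le_one)

lemma co: "i < 3 \<Longrightarrow> (\<lambda>x. x i) \<in> borel_measurable M3"
  unfolding M3_def by (rule meas_coord) simp

lemma int3:
  assumes "f \<in> borel_measurable M3" "AE x in M3. \<bar>f x\<bar> \<le> (B::real)"
  shows "integrable M3 f"
proof -
  interpret prob_space M3 by (rule M3_prob)
  show ?thesis by (rule integrable_const_bound[where B=B]) (use assms in auto)
qed

lemma FV:
  assumes gV: "graphon V"
  shows "integrable M3 (\<lambda>x. Phi \<alpha> (V (x 0) (x 1)) (V (x 0) (x 2)) (V (x 1) (x 2)))"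
    "dens 3 H1 V - \<alpha> * dens 3 H3 V = (\<integral>x. Phi \<alpha> (V (x 0) (x 1)) (V (x 0) (x 2)) (V (x 1) (x 2)) \<partial>M3)"
proof -
  define a where "a x = V (x 0) (x 1)" for x :: "nat \<Rightarrow> real"
  define b where "b x = V (x 0) (x 2)" for x :: "nat \<Rightarrow> real"
  define c where "c x = V (x 1) (x 2)" for x :: "nat \<Rightarrow> real"
  have am[measurable]: "a \<in> borel_measurable M3" unfolding a_def by (intro W2m[OF gV] co) auto
  have bm[measurable]: "b \<in> borel_measurable M3" unfolding b_def by (intro W2m[OF gV] co) auto
  have cm[measurable]: "c \<in> borel_measurable M3" unfolding c_def by (intro W2m[OF gV] co) auto
  have vb: "0 \<le> x \<Longrightarrow> x \<le> 1 \<Longrightarrow> 0 \<le> y \<Longrightarrow> y \<le> 1 \<Longrightarrow> 0 \<le> V x y \<and> V x y \<le> 1" for x y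
    using gV unfolding graphon_def by auto
  have AEb: "AE x in M3. a x \<in> {0..1} \<and> b x \<in> {0..1} \<and> c x \<in> {0..1}"
    using AE3 by eventually_elim (simp add: a_def b_def c_def vb)
  have ip: "ind_prob V 3 F = (\<integral>x. edge_prob V 3 F x \<partial>M3)" for F
    by (simp add: ind_prob_def M3_def)
  have e1: "edge_prob V 3 {{0,1}} x = a x * (1 - b x) * (1 - c x)" for x
    by (simp add: ep doubleton_eq_iff a_def b_def c_def)
  have e2: "edge_prob V 3 {{0,2}} x = (1 - a x) * b x * (1 - c x)" for x
    by (simp add: ep doubleton_eq_iff a_def b_def c_def)
  have e3: "edge_prob V 3 {{1,2}} x = (1 - a x) * (1 - b x) * c x" for x
    by (simp add: ep doubleton_eq_iff a_def b_def c_def)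
  have e4: "edge_prob V 3 (vpairs 3) x = a x * b x * c x" for x
    by (simp add: ep vpairs3 a_def b_def c_def)
  have i1: "integrable M3 (\<lambda>x. a x * (1 - b x) * (1 - c x))" (is "integrable M3 ?f")
  proof (rule int3[where B=1])
    show "AE x in M3. \<bar>?f x\<bar> \<le> 1" using AEb by eventually_elim (rule unit3, auto)
  qed measurable
  have i2: "integrable M3 (\<lambda>x. (1 - a x) * b x * (1 - c x))" (is "integrable M3 ?f")
  proof (rule int3[where B=1])
    show "AE x in M3. \<bar>?f x\<bar> \<le> 1" using AEb by eventually_elim (rule unit3, auto)
  qed measurable
  have i3: "integrable M3 (\<lambda>x. (1 - a x) * (1 - b x) * c x)" (is "integrable M3 ?f")
  proof (rule int3[where B=1])
    show "AE x in M3. \<bar>?f x\<bar> \<le> 1" using AEb by eventually_elim (rule unit3, auto)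
  qed measurable
  have i4: "integrable M3 (\<lambda>x. a x * b x * c x)" (is "integrable M3 ?f")
  proof (rule int3[where B=1])
    show "AE x in M3. \<bar>?f x\<bar> \<le> 1" using AEb by eventually_elim (rule unit3, auto)
  qed measurable
  have P: "(\<lambda>x. Phi \<alpha> (V (x 0) (x 1)) (V (x 0) (x 2)) (V (x 1) (x 2))) =
     (\<lambda>x. a x * (1 - b x) * (1 - c x) + (1 - a x) * b x * (1 - c x) + (1 - a x) * (1 - b x) * c x - \<alpha> * (a x * b x * c x))"
    by (simp add: Phi_def a_def b_def c_def algebra_simps)
  show "integrable M3 (\<lambda>x. Phi \<alpha> (V (x 0) (x 1)) (V (x 0) (x 2)) (V (x 1) (x 2)))"
    unfolding P using i1 i2 i3 i4 by auto
  show "dens 3 H1 V - \<alpha> * dens 3 H3 V = (\<integral>x. Phi \<alpha> (V (x 0) (x 1)) (V (x 0) (x 2)) (V (x 1) (x 2)) \<partial>M3)"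
    unfolding P dens_H1 dens_H3 ip e1 e2 e3 e4
    using i1 i2 i3 i4 by (simp add: integral_add integral_diff)
qed



definition ell1 :: "(real \<Rightarrow> real \<Rightarrow> real) \<Rightarrow> real \<Rightarrow> real \<Rightarrow> real \<Rightarrow> real" where
  "ell1 W a b c = gg W a b * (1 - 2 * Wt W a c - 2 * Wt W b c)"

context
  fixes W :: "real \<Rightarrow> real \<Rightarrow> real"
  assumes gW: "graphon W"
begin

lemmas Wm[measurable (raw)] = W_meas[OF gW]
lemmas Wtm[measurable (raw)] = Wt_meas[OF gW]
lemmas Dtm[measurable (raw)] = Dt_meas[OF gW]
lemmas ggm[measurable (raw)] = gg_meas[OF gW]

lemma ell1_b: "\<bar>ell1 W a b c\<bar> \<le> 3"
proof -
  have "0 \<le> gg W a b" "gg W a b \<le> 1" by (rule gg_b[OF gW])+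
  moreover have "\<bar>1 - 2 * Wt W a c - 2 * Wt W b c\<bar> \<le> 3"
    using Wt_b[OF gW, of a c] Wt_b[OF gW, of b c] by (simp add: abs_le_iff)
  ultimately show ?thesis unfolding ell1_def abs_mult
    by (metis abs_ge_zero abs_of_nonneg mult_le_one mult.commute mult_left_le_one_le mult_right_mono order_trans)
qed

lemma ell1_meas[measurable (raw)]:
  assumes [measurable]: "f \<in> borel_measurable M" "g \<in> borel_measurable M" "h \<in> borel_measurable M"
  shows "(\<lambda>x. ell1 W (f x) (g x) (h x)) \<in> borel_measurable M"
  unfolding ell1_def by measurable

lemma inner_int: "(\<integral>w. ell1 W u v w \<partial>unif) = gg W u v * (1 - 2 * Dt W u - 2 * Dt W v)"
proof -
  interpret U: prob_space unif by (rule unif_prob)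
  have "(\<integral>w. (1 - 2 * Wt W u w - 2 * Wt W v w) \<partial>unif)
      = (\<integral>w. 1 \<partial>unif) - (\<integral>w. 2 * Wt W u w \<partial>unif) - (\<integral>w. 2 * Wt W v w \<partial>unif)"
    using Wt_int[OF gW, of u] Wt_int[OF gW, of v]
    by (simp add: Bochner_Integration.integral_diff)
  also have "\<dots> = 1 - 2 * Dt W u - 2 * Dt W v"
    using U.prob_space by (simp add: Dt_int[OF gW])
  finally show ?thesis unfolding ell1_def by simp
qed

lemma ell1_M3:
  assumes ijk: "{..<3} = {i,j,k}" "i \<noteq> j" "i \<noteq> k" "j \<noteq> k"
  shows "(\<integral>x. ell1 W (x i) (x j) (x k) \<partial>M3) =
     (\<integral>u. \<integral>v. gg W u v * (1 - 2 * Dt W u - 2 * Dt W v) \<partial>unif \<partial>unif)"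
proof -
  have lt: "i < 3" "j < 3" "k < 3" using ijk by auto
  have [measurable]: "(\<lambda>x. x i) \<in> borel_measurable M3" "(\<lambda>x. x j) \<in> borel_measurable M3"
    "(\<lambda>x. x k) \<in> borel_measurable M3" using co lt by auto
  have "(\<integral>x. ell1 W (x i) (x j) (x k) \<partial>M3) =
     (\<integral>u. \<integral>v. \<integral>w. ell1 W u v w \<partial>unif \<partial>unif \<partial>unif)"
    using L3[where f="\<lambda>x. ell1 W (x i) (x j) (x k)" and B=3, OF _ ell1_b ijk] ijk
    by simp
  also have "\<dots> = (\<integral>u. \<integral>v. gg W u v * (1 - 2 * Dt W u - 2 * Dt W v) \<partial>unif \<partial>unif)"
    by (simp add: inner_int)
  finally show ?thesis .
qed

lemma Lint:
  "(\<integral>x. ell1 W (x 0) (x 1) (x 2) + ell1 W (x 0) (x 2) (x 1) + ell1 W (x 1) (x 2) (x 0) \<partial>M3) =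
     3 * (\<integral>u. \<integral>v. gg W u v * (1 - 2 * Dt W u - 2 * Dt W v) \<partial>unif \<partial>unif)"
proof -
  have [measurable]: "(\<lambda>x. x 0) \<in> borel_measurable M3" "(\<lambda>x. x 1) \<in> borel_measurable M3"
    "(\<lambda>x. x 2) \<in> borel_measurable M3" using co by auto
  have I: "integrable M3 (\<lambda>x. ell1 W (x i) (x j) (x k))" if "i < 3" "j < 3" "k < 3" for i j k
  proof -
    have [measurable]: "(\<lambda>x. x i) \<in> borel_measurable M3" "(\<lambda>x. x j) \<in> borel_measurable M3"
      "(\<lambda>x. x k) \<in> borel_measurable M3" using co that by auto
    show ?thesis by (rule int3[where B=3]) (auto simp: ell1_b)
  qed
  have e1: "{..<3::nat} = {0,1,2}" "{..<3::nat} = {0,2,1}" "{..<3::nat} = {1,2,0}"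
    by (auto simp: less_Suc_eq numeral_3_eq_3)
  have S: "(\<integral>x. ell1 W (x 0) (x 1) (x 2) + ell1 W (x 0) (x 2) (x 1) + ell1 W (x 1) (x 2) (x 0) \<partial>M3) =
    (\<integral>x. ell1 W (x 0) (x 1) (x 2) \<partial>M3) + (\<integral>x. ell1 W (x 0) (x 2) (x 1) \<partial>M3) + (\<integral>x. ell1 W (x 1) (x 2) (x 0) \<partial>M3)"
    using I[of 0 1 2] I[of 0 2 1] I[of 1 2 0]
    by (simp add: Bochner_Integration.integral_add)
  have a1: "(\<integral>x. ell1 W (x 0) (x 1) (x 2) \<partial>M3) = (\<integral>u. \<integral>v. gg W u v * (1 - 2 * Dt W u - 2 * Dt W v) \<partial>unif \<partial>unif)"
    by (rule ell1_M3[OF e1(1)]) auto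
  have a2: "(\<integral>x. ell1 W (x 0) (x 2) (x 1) \<partial>M3) = (\<integral>u. \<integral>v. gg W u v * (1 - 2 * Dt W u - 2 * Dt W v) \<partial>unif \<partial>unif)"
    by (rule ell1_M3[OF e1(2)]) auto
  have a3: "(\<integral>x. ell1 W (x 1) (x 2) (x 0) \<partial>M3) = (\<integral>u. \<integral>v. gg W u v * (1 - 2 * Dt W u - 2 * Dt W v) \<partial>unif \<partial>unif)"
    by (rule ell1_M3[OF e1(3)]) auto
  show ?thesis
    unfolding S a1 a2 a3 by simp
qed

end


context
  fixes W :: "real \<Rightarrow> real \<Rightarrow> real"
  assumes gW: "graphon W"
begin

lemmas Wm2[measurable (raw)] = W_meas[OF gW]
lemmas Wtm2[measurable (raw)] = Wt_meas[OF gW]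
lemmas Dtm2[measurable (raw)] = Dt_meas[OF gW]
lemmas ggm2[measurable (raw)] = gg_meas[OF gW]
lemmas ell1m2[measurable (raw)] = ell1_meas[OF gW]

lemma pp_unif: "pair_prob_space unif unif"
proof -
  interpret U: prob_space unif by (rule unif_prob)
  show ?thesis by (simp add: pair_prob_space_def pair_sigma_finite_def U.sigma_finite_measure_axioms unif_prob)
qed

lemma AEsq: "AE p in unif \<Otimes>\<^sub>M unif. fst p \<in> {0..1} \<and> snd p \<in> {0..1}"
proof -
  interpret UU: pair_prob_space unif unif by (rule pp_unif)
  show ?thesis
  proof (rule UU.AE_pair_measure)
    show "{x \<in> space (unif \<Otimes>\<^sub>M unif). fst x \<in> {0..1} \<and> snd x \<in> {0..1}} \<in> sets (unif \<Otimes>\<^sub>M unif)"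
      by measurable
    show "AE x in unif. AE y in unif. fst (x, y) \<in> {0..1} \<and> snd (x, y) \<in> {0..1}"
      using AE_unif
    proof eventually_elim
      fix x :: real assume x: "x \<in> {0..1}"
      show "AE y in unif. fst (x, y) \<in> {0..1} \<and> snd (x, y) \<in> {0..1}"
        using AE_unif by eventually_elim (use x in simp)
    qed
  qed
qed

lemma main:
  assumes a3: "\<alpha> < 3"
    and mx: "\<forall>W'. graphon W' \<longrightarrow>
           dens 3 H1 W' - \<alpha> * dens 3 H3 W' \<le> dens 3 H1 W - \<alpha> * dens 3 H3 W"
  shows "AE p in unif \<Otimes>\<^sub>M unif.
           W (fst p) (snd p) < 1 \<longrightarrow> degree W (fst p) + degree W (snd p) \<ge> 1/2"
proof (rule ccontr)
  assume nAE: "\<not> ?thesis"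
  interpret U: prob_space unif by (rule unif_prob)
  interpret UU: pair_prob_space unif unif by (rule pp_unif)
  interpret M: prob_space M3 by (rule M3_prob)
  define G where "G u v = gg W u v * (1 - 2 * Dt W u - 2 * Dt W v)" for u v
  have G_nn: "0 \<le> G u v" for u v
  proof (cases "Wt W u v < 1 \<and> Dt W u + Dt W v < 1/2")
    case True
    then have "gg W u v = 1 - Wt W u v" by (simp add: gg_def)
    then show ?thesis unfolding G_def using True by (intro mult_nonneg_nonneg) auto
  next
    case False then show ?thesis by (simp add: G_def gg_def)
  qed
  have G_pos: "0 < G u v" if "Wt W u v < 1" "Dt W u + Dt W v < 1/2" for u v
  proof -
    have "gg W u v = 1 - Wt W u v" using that by (simp add: gg_def)
    then show ?thesis unfolding G_def using that by (intro mult_pos_pos) auto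
  qed
  have G_b: "\<bar>G u v\<bar> \<le> 3" for u v
  proof -
    have "\<bar>gg W u v\<bar> \<le> 1" using gg_b[OF gW, of u v] by simp
    moreover have "\<bar>1 - 2 * Dt W u - 2 * Dt W v\<bar> \<le> 3"
      using Dt_b[OF gW, of u] Dt_b[OF gW, of v] by (simp add: abs_le_iff)
    ultimately have "\<bar>gg W u v\<bar> * \<bar>1 - 2 * Dt W u - 2 * Dt W v\<bar> \<le> 1 * 3"
      by (intro mult_mono) auto
    then show ?thesis unfolding G_def abs_mult by simp
  qed
  have Gm: "(\<lambda>p. G (fst p) (snd p)) \<in> borel_measurable (unif \<Otimes>\<^sub>M unif)"
    unfolding G_def by measurable
  have Gint: "integrable (unif \<Otimes>\<^sub>M unif) (\<lambda>p. G (fst p) (snd p))"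
    by (rule int_bound[OF UU.prob_space_axioms Gm G_b])
  define J where "J = integral\<^sup>L (unif \<Otimes>\<^sub>M unif) (\<lambda>p. G (fst p) (snd p))"
  have J_it: "(\<integral>u. \<integral>v. G u v \<partial>unif \<partial>unif) = J"
    unfolding J_def using UU.integral_fst'[OF Gint] by simp
  have J_nn: "0 \<le> J" unfolding J_def by (rule integral_nonneg_AE) (simp add: G_nn)
  have J_pos: "0 < J"
  proof (rule ccontr)
    assume "\<not> 0 < J"
    then have "J = 0" using J_nn by simp
    then have "AE p in unif \<Otimes>\<^sub>M unif. G (fst p) (snd p) = 0"
      using integral_nonneg_eq_0_iff_AE[OF Gint] G_nn unfolding J_def by simp
    then have "AE p in unif \<Otimes>\<^sub>M unif. W (fst p) (snd p) < 1 \<longrightarrow> degree W (fst p) + degree W (snd p) \<ge> 1/2"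
      using AEsq
    proof eventually_elim
      fix p :: "real \<times> real"
      assume G0: "G (fst p) (snd p) = 0" and sq: "fst p \<in> {0..1} \<and> snd p \<in> {0..1}"
      show "W (fst p) (snd p) < 1 \<longrightarrow> 1/2 \<le> degree W (fst p) + degree W (snd p)"
      proof (intro impI, rule ccontr)
        assume w1: "W (fst p) (snd p) < 1" and d1: "\<not> 1/2 \<le> degree W (fst p) + degree W (snd p)"
        have "Wt W (fst p) (snd p) = W (fst p) (snd p)" using sq by (simp add: Wt_id[OF gW])
        moreover have "Dt W (fst p) = degree W (fst p)" "Dt W (snd p) = degree W (snd p)"
          using sq by (simp_all add: Dt_def clip_id)
        ultimately have "0 < G (fst p) (snd p)" using w1 d1 by (intro G_pos) auto
        then show False using G0 by simp
      qed
    qed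
    then show False using nAE by simp
  qed
  have [measurable]: "(\<lambda>x. x 0) \<in> borel_measurable M3" "(\<lambda>x. x 1) \<in> borel_measurable M3"
    "(\<lambda>x. x 2) \<in> borel_measurable M3" using co by auto
  define Lx where "Lx x = ell1 W (x 0) (x 1) (x 2) + ell1 W (x 0) (x 2) (x 1) + ell1 W (x 1) (x 2) (x 0)"
    for x :: "nat \<Rightarrow> real"
  have LJ: "integral\<^sup>L M3 Lx = 3 * J"
    using Lint[OF gW] J_it unfolding Lx_def G_def by simp
  have Lm[measurable]: "Lx \<in> borel_measurable M3" unfolding Lx_def by measurable
  have Lb: "\<bar>Lx x\<bar> \<le> 9" for x
    using ell1_b[OF gW, of "x 0" "x 1" "x 2"] ell1_b[OF gW, of "x 0" "x 2" "x 1"] ell1_b[OF gW, of "x 1" "x 2" "x 0"]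
    unfolding Lx_def by (simp add: abs_le_iff)
  define \<epsilon> where "\<epsilon> = min 1 (J/4)"
  have ep: "0 < \<epsilon>" "\<epsilon> \<le> 1" "\<epsilon> \<le> J/4" using J_pos unfolding \<epsilon>_def by auto
  define W' where "W' = (\<lambda>u v. W u v + \<epsilon> * gg W u v)"
  have gW': "graphon W'"
    unfolding graphon_def
  proof (intro conjI ballI)
    show "(\<lambda>p. W' (fst p) (snd p)) \<in> borel_measurable (lborel \<Otimes>\<^sub>M lborel)"
      unfolding W'_def by measurable
    fix x y :: real assume x: "x \<in> {0..1}" and y: "y \<in> {0..1}"
    have wid: "Wt W x y = W x y" using x y by (rule Wt_id[OF gW])
    have wb: "0 \<le> W x y" "W x y \<le> 1" using W_b[OF gW x y] by auto
    show "W' x y = W' y x" unfolding W'_def using W_sym[OF gW x y] gg_sym[OF gW, of x y] by simp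
    show "0 \<le> W' x y" unfolding W'_def using wb gg_b[OF gW, of x y] ep by simp
    show "W' x y \<le> 1"
    proof (cases "Wt W x y < 1 \<and> Dt W x + Dt W y < 1/2")
      case True
      then have "gg W x y = 1 - W x y" by (simp add: gg_def wid)
      moreover have "\<epsilon> * (1 - W x y) \<le> 1 - W x y" using ep wb by (intro mult_left_le_one_le) auto
      ultimately show ?thesis unfolding W'_def by simp
    next
      case False
      have "gg W x y = 0" unfolding gg_def using False by (rule if_not_P)
      then show ?thesis unfolding W'_def using wb by simp
    qed
  qed
  define PW where "PW x = Phi \<alpha> (W (x 0) (x 1)) (W (x 0) (x 2)) (W (x 1) (x 2))" for x :: "nat \<Rightarrow> real"
  define PW' where "PW' x = Phi \<alpha> (W' (x 0) (x 1)) (W' (x 0) (x 2)) (W' (x 1) (x 2))" for x :: "nat \<Rightarrow> real"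
  have iPW: "integrable M3 PW" unfolding PW_def by (rule FV(1)[OF gW])
  have iPW': "integrable M3 PW'" unfolding PW'_def by (rule FV(1)[OF gW'])
  have FW: "dens 3 H1 W - \<alpha> * dens 3 H3 W = integral\<^sup>L M3 PW" unfolding PW_def by (rule FV(2)[OF gW])
  have FW': "dens 3 H1 W' - \<alpha> * dens 3 H3 W' = integral\<^sup>L M3 PW'" unfolding PW'_def by (rule FV(2)[OF gW'])
  have pw: "AE x in M3. \<epsilon> * Lx x - 6 * \<epsilon>^2 \<le> PW' x - PW x"
    using AE3
  proof eventually_elim
    fix x :: "nat \<Rightarrow> real" assume xs: "x 0 \<in> {0..1} \<and> x 1 \<in> {0..1} \<and> x 2 \<in> {0..1}"
    then have x0: "x 0 \<in> {0..1}" and x1: "x 1 \<in> {0..1}" and x2: "x 2 \<in> {0..1}" by auto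
    define a where "a = W (x 0) (x 1)"
    define b where "b = W (x 0) (x 2)"
    define c where "c = W (x 1) (x 2)"
    define p where "p = gg W (x 0) (x 1)"
    define q where "q = gg W (x 0) (x 2)"
    define r where "r = gg W (x 1) (x 2)"
    have ab: "0 \<le> a" "a \<le> 1" "0 \<le> b" "b \<le> 1" "0 \<le> c" "c \<le> 1"
      using W_b[OF gW x0 x1] W_b[OF gW x0 x2] W_b[OF gW x1 x2] unfolding a_def b_def c_def by auto
    have pb: "0 \<le> p" "p \<le> 1" "0 \<le> q" "q \<le> 1" "0 \<le> r" "r \<le> 1"
      unfolding p_def q_def r_def using gg_b[OF gW] by auto
    have L: "Lx x = p*(1-2*b-2*c) + q*(1-2*a-2*c) + r*(1-2*a-2*b)"
    proof -
      have "Wt W (x 0) (x 1) = a" "Wt W (x 1) (x 0) = a" "Wt W (x 0) (x 2) = b" "Wt W (x 2) (x 0) = b"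
        "Wt W (x 1) (x 2) = c" "Wt W (x 2) (x 1) = c"
        unfolding a_def b_def c_def
        using Wt_id[OF gW x0 x1] Wt_id[OF gW x0 x2] Wt_id[OF gW x1 x2] Wt_sym[OF gW] by metis+
      then show ?thesis unfolding Lx_def ell1_def p_def q_def r_def by simp
    qed
    have P': "PW' x = Phi \<alpha> (a + \<epsilon>*p) (b + \<epsilon>*q) (c + \<epsilon>*r)"
      unfolding PW'_def W'_def a_def b_def c_def p_def q_def r_def ..
    have P: "PW x = Phi \<alpha> a b c" unfolding PW_def a_def b_def c_def ..
    show "\<epsilon> * Lx x - 6 * \<epsilon>^2 \<le> PW' x - PW x"
      unfolding L P P' using poly_ineq[OF ab pb _ , of \<epsilon> \<alpha>] ep a3 by simp
  qed
  have iL': "integrable M3 Lx" by (rule int3[where B=9]) (auto simp: Lb)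
  have iL: "integrable M3 (\<lambda>x. \<epsilon> * Lx x - 6 * \<epsilon>^2)"
    using iL' by (intro Bochner_Integration.integrable_diff integrable_mult_right) auto
  have "(\<integral>x. \<epsilon> * Lx x - 6 * \<epsilon>^2 \<partial>M3) \<le> (\<integral>x. PW' x - PW x \<partial>M3)"
    by (rule integral_mono_AE[OF iL _ pw]) (use iPW iPW' in auto)
  moreover have "(\<integral>x. \<epsilon> * Lx x - 6 * \<epsilon>^2 \<partial>M3) = \<epsilon> * (3 * J) - 6 * \<epsilon>^2"
  proof -
    have "(\<integral>x. \<epsilon> * Lx x - 6 * \<epsilon>^2 \<partial>M3) = (\<integral>x. \<epsilon> * Lx x \<partial>M3) - (\<integral>x. 6 * \<epsilon>^2 \<partial>M3)"
      using iL' by (intro Bochner_Integration.integral_diff) auto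
    also have "\<dots> = \<epsilon> * (3 * J) - 6 * \<epsilon>^2"
      using M.prob_space by (simp add: LJ)
    finally show ?thesis .
  qed
  moreover have "(\<integral>x. PW' x - PW x \<partial>M3) = integral\<^sup>L M3 PW' - integral\<^sup>L M3 PW"
    by (rule Bochner_Integration.integral_diff[OF iPW' iPW])
  moreover have "integral\<^sup>L M3 PW' \<le> integral\<^sup>L M3 PW"
    using mx gW' FW FW' by auto
  ultimately have "\<epsilon> * (3 * J) - 6 * \<epsilon>^2 \<le> 0" by linarith
  then have "\<epsilon> * (3 * J - 6 * \<epsilon>) \<le> 0" by (simp add: algebra_simps power2_eq_square)
  then have "3 * J - 6 * \<epsilon> \<le> 0" using ep(1) by (simp add: mult_le_0_iff)
  then show False using ep(3) J_pos by linarith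
qed

end

theorem lemma8:
  fixes \<alpha> :: real and W :: "real \<Rightarrow> real \<Rightarrow> real"
  assumes "1 \<le> \<alpha>" and "\<alpha> < 3"
    and "graphon W"
    and "\<forall>W'. graphon W' \<longrightarrow>
           dens 3 H1 W' - \<alpha> * dens 3 H3 W' \<le> dens 3 H1 W - \<alpha> * dens 3 H3 W"
  shows "AE p in unif \<Otimes>\<^sub>M unif.
           W (fst p) (snd p) < 1 \<longrightarrow> degree W (fst p) + degree W (snd p) \<ge> 1/2"
  by (rule main[OF assms(3) assms(2) assms(4)])


end
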